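(* Let $(\mathsf G_n,u_n)$ be a sequence of random finite connected graphs with a distinguished vertex $u_n$. Conditionally on $(\mathsf G_n,u_n)$, let $v_n$ be a vertex of $\mathsf G_n$ chosen either uniformly at random or according to the stationary distribution (probability proportional to the degree). Suppose that $(\mathsf G_n,v_n)$ converges in distribution in the local topology and that the number $|\mathsf G_n|$ of vertices satisfies $|\mathsf G_n|\to\infty$ in distribution. Then the graph distance satisfies $d_{\mathsf G_n}(v_n,u_n)\to\infty$ in distribution.
   Context: Local topology: on the space of root-preserving isomorphism classes of rooted, connected, locally finite graphs, given by $d_{\mathrm{loc}}(G^\bullet,H^\bullet)=1/(1+\sup\{k: U_k(G^\bullet)=U_k(H^\bullet)\})$, $U_k$ the rooted radius-$k$ neighbourhood of the root. The same statement holds for planar maps. *)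

theory Defs
  imports "HOL-Probability.Probability"
begin

text \<open>A (simple) graph: a vertex set of natural numbers and an edge predicate.
  Every countable graph (in particular every finite or locally finite connected
  graph) is isomorphic to one of this form.\<close>

record graph =
  verts :: "nat set"
  edges :: "nat \<Rightarrow> nat \<Rightarrow> bool"

type_synonym rgraph = "graph \<times> nat"

definition wf_graph :: "graph \<Rightarrow> bool" where
  "wf_graph G \<longleftrightarrow>
     (\<forall>x y. edges G x y \<longrightarrow> x \<in> verts G \<and> y \<in> verts G) \<and>
     (\<forall>x y. edges G x y \<longrightarrow> edges G y x) \<and>
     (\<forall>x. \<not> edges G x x)"

definition adj :: "graph \<Rightarrow> (nat \<times> nat) set" where
  "adj G = {(x, y). x \<in> verts G \<and> y \<in> verts G \<and> edges G x y}"

definition connected_graph :: "graph \<Rightarrow> bool" where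
  "connected_graph G \<longleftrightarrow> (\<forall>x\<in>verts G. \<forall>y\<in>verts G. (x, y) \<in> (adj G)\<^sup>*)"

definition degree :: "graph \<Rightarrow> nat \<Rightarrow> nat" where
  "degree G v = card {w \<in> verts G. edges G v w}"

definition locally_finite :: "graph \<Rightarrow> bool" where
  "locally_finite G \<longleftrightarrow> (\<forall>v\<in>verts G. finite {w \<in> verts G. edges G v w})"

definition gdist :: "graph \<Rightarrow> nat \<Rightarrow> nat \<Rightarrow> nat" where
  "gdist G x y = (LEAST k. (x, y) \<in> (adj G) ^^ k)"

definition finite_conn_graph :: "graph \<Rightarrow> bool" where
  "finite_conn_graph G \<longleftrightarrow> wf_graph G \<and> finite (verts G) \<and> verts G \<noteq> {} \<and> connected_graph G"

definition RG :: "rgraph set" where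
  "RG = {(G, r). wf_graph G \<and> r \<in> verts G \<and> locally_finite G \<and> connected_graph G}"

definition rooted_iso :: "rgraph \<Rightarrow> rgraph \<Rightarrow> bool" where
  "rooted_iso A B \<longleftrightarrow>
     (\<exists>f. bij_betw f (verts (fst A)) (verts (fst B)) \<and> f (snd A) = snd B \<and>
          (\<forall>x\<in>verts (fst A). \<forall>y\<in>verts (fst A).
              edges (fst A) x y \<longleftrightarrow> edges (fst B) (f x) (f y)))"

definition loc_ball :: "nat \<Rightarrow> rgraph \<Rightarrow> rgraph" where
  "loc_ball k A =
     (let G = fst A; r = snd A;
          B = {y \<in> verts G. \<exists>j\<le>k. (r, y) \<in> (adj G) ^^ j}
      in (\<lparr>verts = B, edges = (\<lambda>x y. edges G x y \<and> x \<in> B \<and> y \<in> B)\<rparr>, r))"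

definition agree_radii :: "rgraph \<Rightarrow> rgraph \<Rightarrow> nat set" where
  "agree_radii A B = {k. rooted_iso (loc_ball k A) (loc_ball k B)}"

definition dloc :: "rgraph \<Rightarrow> rgraph \<Rightarrow> real" where
  "dloc A B = (if finite (agree_radii A B)
               then 1 / (1 + real (Max (agree_radii A B))) else 0)"

definition loc_open :: "rgraph set \<Rightarrow> bool" where
  "loc_open U \<longleftrightarrow> U \<subseteq> RG \<and> (\<forall>x\<in>U. \<exists>e>0. \<forall>y\<in>RG. dloc x y < e \<longrightarrow> y \<in> U)"

definition loc_continuous :: "(rgraph \<Rightarrow> real) \<Rightarrow> bool" where
  "loc_continuous f \<longleftrightarrow>
     (\<forall>x\<in>RG. \<forall>e>0. \<exists>d>0. \<forall>y\<in>RG. dloc x y < d \<longrightarrow> \<bar>f y - f x\<bar> < e)"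

definition loc_bounded :: "(rgraph \<Rightarrow> real) \<Rightarrow> bool" where
  "loc_bounded f \<longleftrightarrow> (\<exists>B. \<forall>x\<in>RG. \<bar>f x\<bar> \<le> B)"

definition local_conv_dist :: "(nat \<Rightarrow> rgraph pmf) \<Rightarrow> bool" where
  "local_conv_dist P \<longleftrightarrow>
     (\<exists>\<mu>. prob_space \<mu> \<and> space \<mu> = RG \<and> sets \<mu> = sigma_sets RG {U. loc_open U} \<and>
          (\<forall>f. loc_continuous f \<and> loc_bounded f \<longrightarrow>
               (\<lambda>n. measure_pmf.expectation (P n) f) \<longlonglongrightarrow> integral\<^sup>L \<mu> f))"

definition uniform_vertex :: "graph \<Rightarrow> nat pmf" where
  "uniform_vertex G = pmf_of_set (verts G)"

text \<open>If the total degree is 0 (for a connected graph: a single vertex) the distribution is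
  the point mass at that vertex, which coincides with the uniform one.\<close>
definition stationary_vertex :: "graph \<Rightarrow> nat pmf" where
  "stationary_vertex G =
     (let tot = (\<Sum>w\<in>verts G. degree G w) in
      if tot = 0 then pmf_of_set (verts G)
      else embed_pmf (\<lambda>v. if v \<in> verts G then real (degree G v) / real tot else 0))"

end

theory Submission
  imports Defs
begin

definition ballv :: "graph \<Rightarrow> nat \<Rightarrow> nat \<Rightarrow> nat set" where
  "ballv G r R = {y\<in>verts G. \<exists>j\<le>R. (r,y)\<in>adj G ^^ j}"

lemma loc_ball_simps:
  "verts (fst (loc_ball R A)) = ballv (fst A) (snd A) R"
  "snd (loc_ball R A) = snd A"
  "edges (fst (loc_ball R A)) x y = (edges (fst A) x y \<and> x \<in> ballv (fst A) (snd A) R \<and> y \<in> ballv (fst A) (snd A) R)"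
  by (simp_all add: loc_ball_def ballv_def Let_def)

lemma adj_sym_pow:
  assumes "wf_graph G" shows "(x,y)\<in>adj G ^^ n \<Longrightarrow> (y,x)\<in>adj G ^^ n"
proof (induction n arbitrary: x y)
  case 0 then show ?case by simp
next
  case (Suc n)
  then obtain z where z1: "(x,z)\<in>adj G ^^ n" and z2: "(z,y)\<in>adj G" by auto
  have "(z,x)\<in>adj G ^^ n" using Suc.IH z1 by blast
  moreover have "(y,z) \<in> adj G" using z2 assms unfolding adj_def wf_graph_def by auto
  ultimately show ?case by (meson relpow_Suc_I2)
qed

lemma adj_pow_verts: "(x,y)\<in>adj G ^^ n \<Longrightarrow> n > 0 \<Longrightarrow> y \<in> verts G"
  by (cases n) (auto simp: adj_def)

lemma adj_pow_mono: fixes A B :: "('a\<times>'a) set" shows "A \<subseteq> B \<Longrightarrow> (x,y)\<in> A ^^ n \<Longrightarrow> (x,y) \<in> B ^^ n"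
proof (induction n arbitrary: y)
  case 0 then show ?case by auto
next
  case (Suc n) then show ?case by (meson relpow_Suc_E relpow_Suc_I subsetD)
qed

lemma ballv_nested:
  assumes "R \<le> k" "r \<in> verts G"
  shows "ballv (fst (loc_ball k (G,r))) r R = ballv G r R"
proof -
  let ?H = "fst (loc_ball k (G,r))"
  have vH: "verts ?H = ballv G r k" by (simp add: loc_ball_simps)
  have adjH: "adj ?H \<subseteq> adj G" by (auto simp: adj_def loc_ball_simps ballv_def)
  have lift: "j \<le> k \<Longrightarrow> (r,y) \<in> adj G ^^ j \<Longrightarrow> (r,y) \<in> adj ?H ^^ j" for j y
  proof (induction j arbitrary: y)
    case 0 then show ?case by simp
  next
    case (Suc j)
    then obtain z where z1: "(r,z)\<in>adj G ^^ j" and z2: "(z,y)\<in>adj G" by auto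
    have "(r,z)\<in>adj ?H ^^ j" using Suc z1 by simp
    moreover have "z \<in> ballv G r k" using z1 z2 Suc.prems unfolding ballv_def adj_def
      by (auto intro!: exI[of _ j])
    moreover have "y \<in> ballv G r k" using Suc.prems z2 unfolding ballv_def adj_def
      by (auto intro!: exI[of _ "Suc j"])
    ultimately have "(z,y) \<in> adj ?H" using z2 by (auto simp: adj_def loc_ball_simps)
    then show ?case using \<open>(r,z)\<in>adj ?H ^^ j\<close> by (meson relpow_Suc_I)
  qed
  show ?thesis
  proof
    show "ballv ?H r R \<subseteq> ballv G r R"
      using adjH unfolding ballv_def vH by (auto intro: adj_pow_mono)
    show "ballv G r R \<subseteq> ballv ?H r R"
    proof
      fix y assume "y \<in> ballv G r R"
      then obtain j where j: "j \<le> R" "(r,y)\<in>adj G ^^ j" "y \<in> verts G" unfolding ballv_def by auto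
      then have "y \<in> ballv G r k" using assms unfolding ballv_def by (auto intro!: exI[of _ j])
      with j assms lift[of j y] show "y \<in> ballv ?H r R" unfolding ballv_def vH by auto
    qed
  qed
qed

lemma iso_paths:
  assumes bij: "bij_betw f (verts G1) (verts G2)"
    and ed: "\<forall>x\<in>verts G1. \<forall>y\<in>verts G1. edges G1 x y \<longleftrightarrow> edges G2 (f x) (f y)"
    and r: "r \<in> verts G1"
  shows "y \<in> verts G1 \<Longrightarrow> (r,y) \<in> adj G1 ^^ j \<longleftrightarrow> (f r, f y) \<in> adj G2 ^^ j"
proof (induction j arbitrary: y)
  case 0
  then show ?case using bij r by (auto simp: bij_betw_def inj_on_def)
next
  case (Suc j)
  show ?case
  proof
    assume "(r,y) \<in> adj G1 ^^ Suc j"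
    then obtain z where z1: "(r,z)\<in>adj G1 ^^ j" and z2: "(z,y)\<in>adj G1" by auto
    have zv: "z \<in> verts G1" using z2 by (auto simp: adj_def)
    have "(f r, f z) \<in> adj G2 ^^ j" using Suc.IH[OF zv] z1 by simp
    moreover have "(f z, f y) \<in> adj G2" using z2 ed bij zv Suc.prems
      by (auto simp: adj_def bij_betw_def)
    ultimately show "(f r, f y) \<in> adj G2 ^^ Suc j" by (meson relpow_Suc_I)
  next
    assume "(f r, f y) \<in> adj G2 ^^ Suc j"
    then obtain w where w1: "(f r,w)\<in>adj G2 ^^ j" and w2: "(w,f y)\<in>adj G2" by auto
    have "w \<in> verts G2" using w2 by (auto simp: adj_def)
    then obtain z where zv: "z \<in> verts G1" and wz: "w = f z" using bij by (auto simp: bij_betw_def)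
    have "(r,z) \<in> adj G1 ^^ j" using Suc.IH[OF zv] w1 wz by simp
    moreover have "(z,y) \<in> adj G1" using w2 wz ed zv Suc.prems
      by (auto simp: adj_def)
    ultimately show "(r,y) \<in> adj G1 ^^ Suc j" by (meson relpow_Suc_I)
  qed
qed

lemma iso_ballv_card:
  assumes "rooted_iso A B" "snd A \<in> verts (fst A)"
  shows "card (ballv (fst A) (snd A) R) = card (ballv (fst B) (snd B) R)"
proof -
  obtain f where bij: "bij_betw f (verts (fst A)) (verts (fst B))" and root: "f (snd A) = snd B"
    and ed: "\<forall>x\<in>verts (fst A). \<forall>y\<in>verts (fst A). edges (fst A) x y \<longleftrightarrow> edges (fst B) (f x) (f y)"
    using assms(1) unfolding rooted_iso_def by blast
  note P = iso_paths[OF bij ed assms(2)]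
  have "bij_betw f (ballv (fst A) (snd A) R) (ballv (fst B) (snd B) R)"
  proof (rule bij_betw_imageI)
    show "inj_on f (ballv (fst A) (snd A) R)"
      using bij unfolding bij_betw_def ballv_def by (auto intro: inj_on_subset)
    show "f ` ballv (fst A) (snd A) R = ballv (fst B) (snd B) R"
    proof
      show "f ` ballv (fst A) (snd A) R \<subseteq> ballv (fst B) (snd B) R"
        using P bij root unfolding ballv_def bij_betw_def by auto
      show "ballv (fst B) (snd B) R \<subseteq> f ` ballv (fst A) (snd A) R"
      proof
        fix y assume y: "y \<in> ballv (fst B) (snd B) R"
        then have "y \<in> verts (fst B)" unfolding ballv_def by auto
        then obtain x where x: "x \<in> verts (fst A)" "y = f x" using bij by (auto simp: bij_betw_def)
        then show "y \<in> f ` ballv (fst A) (snd A) R"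
          using y P[OF x(1)] root unfolding ballv_def by auto
      qed
    qed
  qed
  then show ?thesis by (rule bij_betw_same_card)
qed

lemma ballv_0: "r \<in> verts G \<Longrightarrow> ballv G r 0 = {r}"
  by (auto simp: ballv_def)

lemma root_in_ballv: "r \<in> verts G \<Longrightarrow> r \<in> ballv G r k"
  by (auto simp: ballv_def intro!: exI[of _ 0])

lemma agree_0:
  assumes "x \<in> RG" "y \<in> RG" shows "0 \<in> agree_radii x y"
proof -
  obtain G r H s where xy: "x = (G,r)" "y = (H,s)" by (cases x, cases y)
  have r: "r \<in> verts G" "wf_graph G" and s: "s \<in> verts H" "wf_graph H"
    using assms xy by (auto simp: RG_def)
  have "rooted_iso (loc_ball 0 (G,r)) (loc_ball 0 (H,s))"
    unfolding rooted_iso_def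
    apply (rule exI[of _ "\<lambda>_. s"])
    using r s by (auto simp: loc_ball_simps ballv_0 bij_betw_def wf_graph_def)
  then show ?thesis using xy by (simp add: agree_radii_def)
qed

lemma dloc_close:
  assumes "x \<in> RG" "y \<in> RG" "dloc x y < 1 / (1 + real R)"
  shows "card (ballv (fst x) (snd x) R) = card (ballv (fst y) (snd y) R)"
proof -
  obtain G r H s where xy: "x = (G,r)" "y = (H,s)" by (cases x, cases y)
  have r: "r \<in> verts G" and s: "s \<in> verts H"
    using assms xy by (auto simp: RG_def)
  have ne: "0 \<in> agree_radii x y" by (rule agree_0[OF assms(1,2)])
  obtain k where k: "R \<le> k" "k \<in> agree_radii x y"
  proof (cases "finite (agree_radii x y)")
    case True
    then have d: "dloc x y = 1 / (1 + real (Max (agree_radii x y)))" by (simp add: dloc_def)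
    have "R < Max (agree_radii x y)"
    proof (rule ccontr)
      assume "\<not> ?thesis"
      then have "real (Max (agree_radii x y)) \<le> real R" by simp
      then have "1 / (1 + real R) \<le> 1 / (1 + real (Max (agree_radii x y)))"
        by (intro divide_left_mono) auto
      with assms(3) d show False by simp
    qed
    moreover have "Max (agree_radii x y) \<in> agree_radii x y" using True ne by (intro Max_in) auto
    ultimately show ?thesis using that less_imp_le by blast
  next
    case False
    then show ?thesis using that by (meson infinite_nat_iff_unbounded_le)
  qed
  have iso: "rooted_iso (loc_ball k x) (loc_ball k y)" using k by (simp add: agree_radii_def)
  have "card (ballv (fst (loc_ball k x)) (snd (loc_ball k x)) R) = card (ballv (fst (loc_ball k y)) (snd (loc_ball k y)) R)"
    by (rule iso_ballv_card[OF iso]) (use r xy in \<open>simp add: loc_ball_simps root_in_ballv\<close>)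
  then show ?thesis using ballv_nested[OF k(1) r] ballv_nested[OF k(1) s] xy by (simp add: loc_ball_simps)
qed

definition UU :: "nat \<Rightarrow> nat \<Rightarrow> rgraph set" where
  "UU R M = {A \<in> RG. M \<le> card (ballv (fst A) (snd A) R)}"

lemma UU_open: "loc_open (UU R M)"
  unfolding loc_open_def
proof (intro conjI ballI)
  show "UU R M \<subseteq> RG" by (auto simp: UU_def)
  fix x assume x: "x \<in> UU R M"
  show "\<exists>e>0. \<forall>y\<in>RG. dloc x y < e \<longrightarrow> y \<in> UU R M"
  proof (intro exI[of _ "1 / (1 + real R)"] conjI ballI impI)
    fix y assume "y \<in> RG" "dloc x y < 1 / (1 + real R)"
    with x dloc_close[of x y R] show "y \<in> UU R M" by (auto simp: UU_def)
  qed simp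
qed

lemma UU_cont: "loc_continuous (indicator (UU R M) :: rgraph \<Rightarrow> real)"
  unfolding loc_continuous_def
proof (intro ballI allI impI)
  fix x :: rgraph and e :: real assume x: "x \<in> RG" and e: "e > 0"
  show "\<exists>d>0. \<forall>y\<in>RG. dloc x y < d \<longrightarrow> \<bar>indicator (UU R M) y - indicator (UU R M) x\<bar> < e"
  proof (intro exI[of _ "1 / (1 + real R)"] conjI ballI impI)
    fix y assume "y \<in> RG" "dloc x y < 1 / (1 + real R)"
    with x e dloc_close[of x y R] show "\<bar>indicator (UU R M) y - indicator (UU R M) x\<bar> < e"
      by (auto simp: UU_def indicator_def)
  qed simp
qed

lemma UU_bounded: "loc_bounded (indicator (UU R M) :: rgraph \<Rightarrow> real)"
  unfolding loc_bounded_def by (intro exI[of _ 1]) (auto simp: indicator_def)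

lemma tight:
  assumes "local_conv_dist P" "e > 0"
  shows "\<exists>M. eventually (\<lambda>n. measure_pmf.prob (P n) (UU R M) < e) sequentially"
proof -
  obtain \<mu> where pr: "prob_space \<mu>" and sp: "space \<mu> = RG" and se: "sets \<mu> = sigma_sets RG {U. loc_open U}"
    and conv: "\<And>f. loc_continuous f \<and> loc_bounded f \<Longrightarrow>
               (\<lambda>n. measure_pmf.expectation (P n) f) \<longlonglongrightarrow> integral\<^sup>L \<mu> f"
    using assms(1) unfolding local_conv_dist_def by blast
  have fm: "finite_measure \<mu>" using pr by (simp add: prob_space_def)
  have meas: "UU R M \<in> sets \<mu>" for M
    using UU_open[of R M] se by (auto intro: sigma_sets.Basic)
  have anti: "antimono_on UNIV (UU R)"
  proof (rule monotone_onI)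
    fix a b :: nat assume "a \<le> b" then show "UU R b \<le> UU R a" unfolding UU_def by auto
  qed
  have empty: "(\<Inter> (range (UU R))) = {}"
  proof -
    have "A \<notin> UU R (Suc (card (ballv (fst A) (snd A) R)))" for A by (simp add: UU_def)
    then show ?thesis by blast
  qed
  have "(\<lambda>M. measure \<mu> (UU R M)) \<longlonglongrightarrow> measure \<mu> (\<Inter> (range (UU R)))"
    by (rule finite_measure.finite_Lim_measure_decseq[OF fm]) (use meas anti in auto)
  then have "(\<lambda>M. measure \<mu> (UU R M)) \<longlonglongrightarrow> 0" using empty by simp
  from order_tendstoD(2)[OF this assms(2)] obtain M where M: "measure \<mu> (UU R M) < e"
    by (meson eventually_sequentially order_refl)
  have "(\<lambda>n. measure_pmf.expectation (P n) (indicator (UU R M) :: rgraph \<Rightarrow> real)) \<longlonglongrightarrow> integral\<^sup>L \<mu> (indicator (UU R M))"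
    using conv UU_cont UU_bounded by blast
  moreover have "integral\<^sup>L \<mu> (indicator (UU R M) :: rgraph \<Rightarrow> real) = measure \<mu> (UU R M)"
    using sp by (simp add: UU_def Int_absorb2 subsetI)
  ultimately have "(\<lambda>n. measure_pmf.prob (P n) (UU R M)) \<longlonglongrightarrow> measure \<mu> (UU R M)"
    by simp
  then have "eventually (\<lambda>n. measure_pmf.prob (P n) (UU R M) < e) sequentially"
    using M by (rule order_tendstoD(2))
  then show ?thesis by blast
qed

lemma deg_pos:
  assumes fc: "finite_conn_graph G" and c2: "2 \<le> card (verts G)" and a: "a \<in> verts G"
  shows "1 \<le> degree G a"
proof -
  have fin: "finite (verts G)" using fc by (simp add: finite_conn_graph_def)
  have "\<not> verts G \<subseteq> {a}"
  proof
    assume "verts G \<subseteq> {a}"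
    then have "card (verts G) \<le> card {a}" by (intro card_mono) auto
    with c2 show False by simp
  qed
  then obtain b where b: "b \<in> verts G" "b \<noteq> a" by blast
  have "(a,b) \<in> (adj G)\<^sup>*" using fc a b unfolding finite_conn_graph_def connected_graph_def by blast
  then have "(a,b) \<in> (adj G)\<^sup>+" using b(2) by (simp add: rtrancl_eq_or_trancl)
  then obtain z where "(a,z) \<in> adj G" by (meson tranclD)
  then have "z \<in> {w \<in> verts G. edges G a w}" by (simp add: adj_def)
  moreover have "finite {w \<in> verts G. edges G a w}" using fin by simp
  ultimately have "0 < card {w \<in> verts G. edges G a w}" by (simp add: card_gt_0_iff del: mem_Collect_eq) blast
  then show ?thesis by (simp add: degree_def)
qed

lemma sel_props:
  assumes sel_choice: "sel = uniform_vertex \<or> sel = stationary_vertex"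
    and fc: "finite_conn_graph G" and c2: "2 \<le> card (verts G)"
  shows "set_pmf (sel G) \<subseteq> verts G"
    and "\<And>a. a \<in> verts G \<Longrightarrow> pmf (sel G) a \<le> real (max 1 (degree G a)) / real (card (verts G))"
proof -
  have fin: "finite (verts G)" and ne: "verts G \<noteq> {}" using fc by (auto simp: finite_conn_graph_def)
  have "set_pmf (sel G) \<subseteq> verts G \<and> (\<forall>a\<in>verts G. pmf (sel G) a \<le> real (max 1 (degree G a)) / real (card (verts G)))"
  proof (cases "sel = uniform_vertex")
    case True
    then show ?thesis using fin ne
      by (auto simp: uniform_vertex_def pmf_of_set intro!: divide_right_mono)
  next
    case False
    then have st: "sel = stationary_vertex" using sel_choice by simp
    define tot where "tot = (\<Sum>w\<in>verts G. degree G w)"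
    have "card (verts G) = (\<Sum>w\<in>verts G. (1::nat))" by simp
    also have "\<dots> \<le> tot" unfolding tot_def by (rule sum_mono) (use deg_pos[OF fc c2] in auto)
    finally have tot: "card (verts G) \<le> tot" .
    then have tot0: "tot \<noteq> 0" using c2 by simp
    define f where "f = (\<lambda>v. if v \<in> verts G then real (degree G v) / real tot else 0)"
    have sg: "sel G = embed_pmf f" using st tot0 unfolding f_def tot_def by (simp add: stationary_vertex_def Let_def)
    have f0: "\<And>x. 0 \<le> f x" by (simp add: f_def)
    have "(\<integral>\<^sup>+x. ennreal (f x) \<partial>count_space UNIV) = (\<integral>\<^sup>+x. ennreal (f x) * indicator (verts G) x \<partial>count_space UNIV)"
      by (intro nn_integral_cong) (auto simp: f_def indicator_def)
    also have "\<dots> = (\<integral>\<^sup>+x. ennreal (f x) \<partial>count_space (verts G))"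
      by (simp add: nn_integral_count_space_indicator)
    also have "\<dots> = (\<Sum>x\<in>verts G. ennreal (f x))" using fin by (simp add: nn_integral_count_space_finite)
    also have "\<dots> = ennreal (\<Sum>x\<in>verts G. f x)" using f0 by (simp add: sum_ennreal)
    also have "(\<Sum>x\<in>verts G. f x) = (\<Sum>x\<in>verts G. real (degree G x)) / real tot"
      by (simp add: f_def sum_divide_distrib)
    also have "\<dots> = 1" using tot0 by (simp add: tot_def flip: of_nat_sum)
    finally have int1: "(\<integral>\<^sup>+x. ennreal (f x) \<partial>count_space UNIV) = 1" by simp
    have pm: "pmf (sel G) a = f a" for a unfolding sg by (rule pmf_embed_pmf[OF f0 int1])
    have ss: "set_pmf (sel G) \<subseteq> verts G" unfolding sg set_embed_pmf[OF f0 int1] by (auto simp: f_def)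
    have "pmf (sel G) a \<le> real (max 1 (degree G a)) / real (card (verts G))" if a: "a \<in> verts G" for a
    proof -
      have "pmf (sel G) a = real (degree G a) / real tot" using a by (simp add: pm f_def)
      also have "\<dots> \<le> real (degree G a) / real (card (verts G))"
        using tot c2 by (intro divide_left_mono) auto
      also have "\<dots> \<le> real (max 1 (degree G a)) / real (card (verts G))"
        by (intro divide_right_mono) auto
      finally show ?thesis .
    qed
    then show ?thesis using ss by blast
  qed
  then show "set_pmf (sel G) \<subseteq> verts G"
    and "\<And>a. a \<in> verts G \<Longrightarrow> pmf (sel G) a \<le> real (max 1 (degree G a)) / real (card (verts G))"
    by auto
qed

lemma gdist_path:
  assumes "connected_graph G" "v \<in> verts G" "u \<in> verts G"
  shows "(v,u) \<in> adj G ^^ gdist G v u"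
proof -
  have "(v,u) \<in> (adj G)\<^sup>*" using assms unfolding connected_graph_def by blast
  then obtain n where "(v,u) \<in> adj G ^^ n" using rtrancl_power by blast
  then show ?thesis unfolding gdist_def by (rule LeastI)
qed

lemma pointwise:
  assumes sel_choice: "sel = uniform_vertex \<or> sel = stationary_vertex"
    and fc: "finite_conn_graph G" and u: "u \<in> verts G"
    and N: "1 \<le> N" "N < card (verts G)"
  shows "measure_pmf.prob (sel G) {v. gdist G v u \<le> K}
     \<le> measure_pmf.prob (sel G) {v. M \<le> card (ballv G v (2*K+1))} + real (M^2) / real N"
proof -
  have fin: "finite (verts G)" and wf: "wf_graph G" and con: "connected_graph G"
    using fc by (auto simp: finite_conn_graph_def)
  have c2: "2 \<le> card (verts G)" using N by simp
  note sp = sel_props[OF sel_choice fc c2]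
  define A where "A = {v \<in> verts G. gdist G v u \<le> K}"
  define B where "B = {y \<in> verts G. \<exists>j\<le>K+1. (y,u) \<in> adj G ^^ j}"
  have finA: "finite A" and finB: "finite B" using fin by (auto simp: A_def B_def)
  have p1: "measure_pmf.prob (sel G) {v. gdist G v u \<le> K} \<le> measure_pmf.prob (sel G) A"
  proof -
    have "measure_pmf.prob (sel G) {v. gdist G v u \<le> K}
        = measure_pmf.prob (sel G) ({v. gdist G v u \<le> K} \<inter> set_pmf (sel G))"
      by (simp add: measure_Int_set_pmf)
    also have "\<dots> \<le> measure_pmf.prob (sel G) A"
      using sp(1) by (intro measure_pmf.finite_measure_mono) (auto simp: A_def)
    finally show ?thesis .
  qed
  have Apath: "a \<in> A \<Longrightarrow> \<exists>j\<le>K. (a,u) \<in> adj G ^^ j" for a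
    using gdist_path[OF con _ u] unfolding A_def by blast
  have AB: "A \<subseteq> B" using Apath unfolding B_def by (auto simp: A_def) (meson le_SucI)
  have Bball: "B \<subseteq> ballv G a (2*K+1)" if a: "a \<in> A" for a
  proof
    fix y assume "y \<in> B"
    then obtain j2 where j2: "j2 \<le> K+1" "(y,u) \<in> adj G ^^ j2" "y \<in> verts G" unfolding B_def by auto
    obtain j1 where j1: "j1 \<le> K" "(a,u) \<in> adj G ^^ j1" using Apath[OF a] by blast
    have "(u,y) \<in> adj G ^^ j2" using adj_sym_pow[OF wf j2(2)] .
    then have "(a,y) \<in> adj G ^^ (j1 + j2)" using j1(2) by (auto simp: relpow_add)
    then show "y \<in> ballv G a (2*K+1)" unfolding ballv_def using j1 j2 by (auto intro!: exI[of _ "j1+j2"])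
  qed
  have cardB: "card B \<le> card (ballv G a (2*K+1))" if "a \<in> A" for a
    using Bball[OF that] fin by (intro card_mono) (auto simp: ballv_def)
  have degB: "degree G a \<le> card B" if a: "a \<in> A" for a
  proof -
    obtain j1 where j1: "j1 \<le> K" "(a,u) \<in> adj G ^^ j1" using Apath[OF a] by blast
    have av: "a \<in> verts G" using a by (simp add: A_def)
    have "{w \<in> verts G. edges G a w} \<subseteq> B"
    proof
      fix w assume w: "w \<in> {w \<in> verts G. edges G a w}"
      then have "(w,a) \<in> adj G" using wf av unfolding adj_def wf_graph_def by auto
      then have "(w,u) \<in> adj G ^^ Suc j1" using j1(2) by (rule relpow_Suc_I2)
      then show "w \<in> B" using w j1(1) unfolding B_def by (auto intro!: exI[of _ "Suc j1"])
    qed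
    then show ?thesis unfolding degree_def using finB by (rule card_mono[rotated])
  qed
  have nn: "0 \<le> real (M^2) / real N" by simp
  show ?thesis
  proof (cases "M \<le> card B")
    case True
    have "A \<subseteq> {v. M \<le> card (ballv G v (2*K+1))}" using True cardB by force
    then have "measure_pmf.prob (sel G) A \<le> measure_pmf.prob (sel G) {v. M \<le> card (ballv G v (2*K+1))}"
      by (intro measure_pmf.finite_measure_mono) auto
    then show ?thesis using p1 nn by linarith
  next
    case False
    then have BM: "card B < M" by simp
    have "measure_pmf.prob (sel G) A = (\<Sum>a\<in>A. pmf (sel G) a)"
      using finA by (rule measure_measure_pmf_finite)
    also have "\<dots> \<le> (\<Sum>a\<in>A. real (card B) / real (card (verts G)))"
    proof (rule sum_mono)
      fix a assume a: "a \<in> A"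
      have av: "a \<in> verts G" using a by (simp add: A_def)
      have "1 \<le> card B" using AB a finB by (metis One_nat_def Suc_leI card_gt_0_iff empty_iff subsetD)
      then have "max 1 (degree G a) \<le> card B" using degB[OF a] by simp
      then have "real (max 1 (degree G a)) / real (card (verts G)) \<le> real (card B) / real (card (verts G))"
        by (intro divide_right_mono) auto
      then show "pmf (sel G) a \<le> real (card B) / real (card (verts G))" using sp(2)[OF av] by linarith
    qed
    also have "\<dots> = real (card A) * real (card B) / real (card (verts G))" by simp
    also have "\<dots> \<le> real (card B) * real (card B) / real (card (verts G))"
      using card_mono[OF finB AB] by (intro divide_right_mono mult_right_mono) auto
    also have "\<dots> \<le> real (M^2) / real (card (verts G))"
    proof (intro divide_right_mono)
      have "card B * card B \<le> M * M" using BM by (intro mult_le_mono) auto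
      then have "real (card B * card B) \<le> real (M * M)" by linarith
      then show "real (card B) * real (card B) \<le> real (M^2)" by (simp add: power2_eq_square)
    qed simp
    also have "\<dots> \<le> real (M^2) / real N"
      using N by (intro divide_left_mono) auto
    finally show ?thesis using p1 measure_nonneg[of "measure_pmf (sel G)" "{v. M \<le> card (ballv G v (2*K+1))}"] by linarith
  qed
qed

lemma measure_bind_pmf':
  "measure_pmf.prob (bind_pmf M f) X = (\<integral>x. measure_pmf.prob (f x) X \<partial>M)"
proof -
  have int: "integrable (measure_pmf M) (\<lambda>x. measure_pmf.prob (f x) X)"
    by (rule measure_pmf.integrable_const_bound[where B=1]) auto
  have "ennreal (measure_pmf.prob (bind_pmf M f) X) = emeasure (measure_pmf (bind_pmf M f)) X"
    by (simp add: measure_pmf.emeasure_eq_measure)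
  also have "\<dots> = (\<integral>\<^sup>+x. emeasure (measure_pmf (f x)) X \<partial>M)" by (rule emeasure_bind_pmf)
  also have "\<dots> = (\<integral>\<^sup>+x. ennreal (measure_pmf.prob (f x) X) \<partial>M)"
    by (simp add: measure_pmf.emeasure_eq_measure)
  also have "\<dots> = ennreal (\<integral>x. measure_pmf.prob (f x) X \<partial>M)"
    by (rule nn_integral_eq_integral[OF int]) auto
  finally show ?thesis
    by (simp add: integral_nonneg_AE)
qed

lemma probJ:
  "measure_pmf.prob (bind_pmf L (\<lambda>(G, u). map_pmf (\<lambda>v. (G, u, v)) (sel G))) X
   = (\<integral>x. measure_pmf.prob (sel (fst x)) {v. (fst x, snd x, v) \<in> X} \<partial>L)"
  unfolding measure_bind_pmf'
  by (intro Bochner_Integration.integral_cong refl) (auto simp: vimage_def split: prod.splits)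

lemma bounded_int: "integrable (measure_pmf L) (\<lambda>x. measure_pmf.prob (p x) (X x))"
  by (rule measure_pmf.integrable_const_bound[where B=1]) auto

theorem proposition2p3:
  fixes L :: "nat \<Rightarrow> rgraph pmf"
    and sel :: "graph \<Rightarrow> nat pmf"
    and J :: "nat \<Rightarrow> (graph \<times> nat \<times> nat) pmf"
  assumes finite_conn: "\<And>n. set_pmf (L n) \<subseteq> {(G, u). finite_conn_graph G \<and> u \<in> verts G}"
    and sel_choice: "sel = uniform_vertex \<or> sel = stationary_vertex"
    and J_def: "\<And>n. J n = bind_pmf (L n) (\<lambda>(G, u). map_pmf (\<lambda>v. (G, u, v)) (sel G))"
    and local_conv: "local_conv_dist (\<lambda>n. map_pmf (\<lambda>(G, u, v). (G, v)) (J n))"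
    and size_infty: "\<And>K::nat. (\<lambda>n. measure_pmf.prob (L n) {(G, u). card (verts G) \<le> K}) \<longlonglongrightarrow> 0"
  shows "\<And>K::nat. (\<lambda>n. measure_pmf.prob (J n) {(G, u, v). gdist G v u \<le> K}) \<longlonglongrightarrow> 0"
proof -
  fix K :: nat
  define R where "R = 2*K+1"
  define P where "P = (\<lambda>n. map_pmf (\<lambda>(G, u, v). (G, v)) (J n))"
  show "(\<lambda>n. measure_pmf.prob (J n) {(G, u, v). gdist G v u \<le> K}) \<longlonglongrightarrow> 0"
    unfolding tendsto_iff
  proof (intro allI impI)
    fix e :: real assume e: "e > 0"
    obtain M where evM: "eventually (\<lambda>n. measure_pmf.prob (P n) (UU R M) < e/3) sequentially"
      using tight[of P "e/3" R] local_conv e unfolding P_def by auto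
    define N :: nat where "N = nat \<lceil>3 * real (M^2) / e\<rceil> + 1"
    have N1: "1 \<le> N" by (simp add: N_def)
    have c: "real (M^2) / real N < e/3"
    proof -
      have "3 * real (M^2) / e < real N" unfolding N_def by linarith
      then have "3 * real (M^2) < real N * e" using e by (simp add: divide_less_eq)
      then show ?thesis using N1 by (simp add: divide_less_eq mult.commute)
    qed
    have evN: "eventually (\<lambda>n. measure_pmf.prob (L n) {(G, u). card (verts G) \<le> N} < e/3) sequentially"
      using order_tendstoD(2)[OF size_infty[of N], of "e/3"] e by simp
    have bound: "measure_pmf.prob (J n) {(G, u, v). gdist G v u \<le> K}
       \<le> measure_pmf.prob (P n) (UU R M) + measure_pmf.prob (L n) {(G, u). card (verts G) \<le> N} + real (M^2) / real N"
      for n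
    proof -
      define h where "h = (\<lambda>x::rgraph. measure_pmf.prob (sel (fst x)) {v. gdist (fst x) v (snd x) \<le> K})"
      define q where "q = (\<lambda>x::rgraph. measure_pmf.prob (sel (fst x)) {v. (fst x, v) \<in> UU R M})"
      define S :: "rgraph set" where "S = {(G, u). card (verts G) \<le> N}"
      have eq1: "measure_pmf.prob (J n) {(G, u, v). gdist G v u \<le> K} = (\<integral>x. h x \<partial>L n)"
        unfolding J_def probJ h_def by simp
      have eq2: "measure_pmf.prob (P n) (UU R M) = (\<integral>x. q x \<partial>L n)"
        unfolding P_def measure_map_pmf J_def probJ q_def
        by (intro Bochner_Integration.integral_cong refl) (auto simp: vimage_def)
      have pw: "h x \<le> q x + indicator S x + real (M^2) / real N" if x: "x \<in> set_pmf (L n)" for x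
      proof -
        obtain G u where xGu: "x = (G,u)" by (cases x)
        have fc: "finite_conn_graph G" and u: "u \<in> verts G" using finite_conn[of n] x xGu by auto
        show ?thesis
        proof (cases "card (verts G) \<le> N")
          case True
          then have "indicator S x = (1::real)" by (simp add: S_def xGu)
          moreover have "h x \<le> 1" by (simp add: h_def)
          moreover have "0 \<le> q x" by (simp add: q_def)
          moreover have "0 \<le> real (M^2) / real N" by simp
          ultimately show ?thesis by linarith
        next
          case False
          then have cN: "N < card (verts G)" by simp
          have c2: "2 \<le> card (verts G)" using cN N1 by simp
          have "h x \<le> measure_pmf.prob (sel G) {v. M \<le> card (ballv G v (2*K+1))} + real (M^2) / real N"
            using pointwise[OF sel_choice fc u N1 cN] by (simp add: h_def xGu)
          moreover have "measure_pmf.prob (sel G) {v. M \<le> card (ballv G v (2*K+1))} \<le> q x"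
          proof -
            have ss: "set_pmf (sel G) \<subseteq> verts G" by (rule sel_props(1)[OF sel_choice fc c2])
            have "measure_pmf.prob (sel G) {v. M \<le> card (ballv G v (2*K+1))}
                = measure_pmf.prob (sel G) ({v. M \<le> card (ballv G v (2*K+1))} \<inter> set_pmf (sel G))"
              by (simp add: measure_Int_set_pmf)
            also have "\<dots> \<le> q x" unfolding q_def xGu fst_conv
            proof (intro measure_pmf.finite_measure_mono)
              show "{v. M \<le> card (ballv G v (2 * K + 1))} \<inter> set_pmf (sel G) \<subseteq> {v. (G, v) \<in> UU R M}"
              proof
                fix v assume v: "v \<in> {v. M \<le> card (ballv G v (2 * K + 1))} \<inter> set_pmf (sel G)"
                then have "v \<in> verts G" using ss by auto
                then have "(G,v) \<in> RG" using fc
                  by (auto simp: RG_def finite_conn_graph_def locally_finite_def)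
                then show "v \<in> {v. (G, v) \<in> UU R M}" using v by (simp add: UU_def R_def)
              qed
            qed auto
            finally show ?thesis .
          qed
          moreover have "0 \<le> (indicator S x :: real)" by simp
          ultimately show ?thesis by linarith
        qed
      qed
      have ih: "integrable (measure_pmf (L n)) h" unfolding h_def by (rule bounded_int)
      have iq: "integrable (measure_pmf (L n)) q" unfolding q_def by (rule bounded_int)
      have iS: "integrable (measure_pmf (L n)) (indicator S :: rgraph \<Rightarrow> real)"
        by (rule measure_pmf.integrable_const_bound[where B=1]) (auto simp: indicator_def)
      have ic: "integrable (measure_pmf (L n)) (\<lambda>x. real (M^2) / real N)" by simp
      have iqS: "integrable (measure_pmf (L n)) (\<lambda>x. q x + indicator S x)"
        using iq iS by (rule Bochner_Integration.integrable_add)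
      have iall: "integrable (measure_pmf (L n)) (\<lambda>x. q x + indicator S x + real (M^2) / real N)"
        using iqS ic by (rule Bochner_Integration.integrable_add)
      have "(\<integral>x. h x \<partial>L n) \<le> (\<integral>x. q x + indicator S x + real (M^2) / real N \<partial>L n)"
        by (rule integral_mono_AE[OF ih iall]) (use pw in \<open>simp add: AE_measure_pmf_iff\<close>)
      also have "\<dots> = (\<integral>x. q x + indicator S x \<partial>L n) + real (M^2) / real N"
        using Bochner_Integration.integral_add[OF iqS ic] by simp
      also have "(\<integral>x. q x + indicator S x \<partial>L n) = (\<integral>x. q x \<partial>L n) + measure_pmf.prob (L n) S"
        using Bochner_Integration.integral_add[OF iq iS] by simp
      finally show ?thesis using eq1 eq2 by (simp add: S_def)
    qed
    show "eventually (\<lambda>n. dist (measure_pmf.prob (J n) {(G, u, v). gdist G v u \<le> K}) 0 < e) sequentially"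
      using evM evN
    proof eventually_elim
      case (elim n)
      have nn: "0 \<le> measure_pmf.prob (J n) {(G, u, v). gdist G v u \<le> K}" by simp
      then have "dist (measure_pmf.prob (J n) {(G, u, v). gdist G v u \<le> K}) 0
          = measure_pmf.prob (J n) {(G, u, v). gdist G v u \<le> K}" by (simp add: dist_real_def)
      then show ?case using bound[of n] c elim by linarith
    qed
  qed
qed

end
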